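(* Let $\tilde{\lambda}$ be such that there is a real number $c>-1$ with \[ 1=\sqrt{c+1}+2\tilde{\lambda}^2\log\Big(1+\frac{1}{\sqrt{c+1}}\Big), \] and fix such a $c$. Let $\rho(Y):=\frac{2\tilde{\lambda}^2}{\sqrt{Y}}$ for $Y\geq 1$ and define, for $X\geq 1$, \[ W(X):=\sqrt{X+c}+\frac{2\tilde{\lambda}^2}{\sqrt{X}}\log\Big(\frac{(\sqrt{X+c}+\sqrt{X})(\sqrt{X}+1)}{\sqrt{X}\sqrt{1+c}+\sqrt{X+c}}\Big). \] Then $W$ solves the integral equation \[ W(X)^2+\int_1^{\infty}dY\,\rho(Y)\,\frac{W(X)-W(Y)}{X-Y}= X+\int_1^{\infty}dY\,\rho(Y)\,\frac{W(1)-W(Y)}{1-Y}\qquad (X\geq 1), \] understood with the two integrals combined into the single (convergent) integral $\int_1^\infty dY\,\rho(Y)\big[\frac{W(X)-W(Y)}{X-Y}-\frac{W(1)-W(Y)}{1-Y}\big]$ on the left, so that the equation reads $W(X)^2+\int_1^\infty dY\,\rho(Y)\big[\frac{W(X)-W(Y)}{X-Y}-\frac{W(1)-W(Y)}{1-Y}\big]=X$; difference quotients at coinciding arguments are understood by continuous extension.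
   Context: This is the integral equation satisfied (in the large-matrix limit) by the renormalised one-point function of the $\Phi^3$ matrix model with linearly spaced eigenvalues $e(x)=x$ of the external matrix, in the variable $X=(2x+1)^2$, with normalisation $W(1)=1$. Square roots and logarithms are the real positive ones. *)

theory Defs
  imports "HOL-Analysis.Analysis"
begin

definition Wfun :: "real \<Rightarrow> real \<Rightarrow> real \<Rightarrow> real" where
  "Wfun lam c X = sqrt (X + c) + 2 * lam^2 / sqrt X *
     ln ((sqrt (X + c) + sqrt X) * (sqrt X + 1) / (sqrt X * sqrt (1 + c) + sqrt (X + c)))"

definition rho :: "real \<Rightarrow> real \<Rightarrow> real" where
  "rho lam Y = 2 * lam^2 / sqrt Y"

definition dq :: "(real \<Rightarrow> real) \<Rightarrow> real \<Rightarrow> real \<Rightarrow> real" where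
  "dq f a b = (if a = b then deriv f a else (f a - f b) / (a - b))"

end

theory Submission
  imports Defs "HOL-Real_Asymp.Real_Asymp"
begin


definition kf :: "real \<Rightarrow> real \<Rightarrow> real \<Rightarrow> real" where
  "kf c p Z = 1 / (sqrt Z * sqrt (Z + c) * (p + sqrt (Z + c)))"

lemma lim1:
  fixes u x c :: real assumes "u > 0" "x > 0"
  shows "((\<lambda>Z. 2/x * (ln (u * sqrt Z + x * sqrt (Z+c)) - ln (x + sqrt Z))) \<longlongrightarrow> 2/x * ln (u+x)) at_top"
  using assms by real_asymp

lemma alg:
  fixes z w u x c :: real
  assumes "z>0" "w>0" "u>0" "x>0" "u^2 = x^2 + c" "w^2 = z^2 + c"
  shows "2/x*((u/(2*z) + x/(2*w))/(u*z + x*w) - (1/(2*z))/(x+z)) = 1/(z*w*(u+w))"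
proof -
  have "u*z+x*w > 0" "x + z > 0" "u + w > 0" using assms by (auto intro: add_pos_pos)
  then show ?thesis using assms
    apply (simp add: divide_simps)
    apply algebra
    done
qed

lemma L1:
  fixes c X :: real
  assumes hc: "c > -1" and hX: "X \<ge> 1"
  shows "(kf c (sqrt (X+c)) has_integral
     (2 / sqrt X * ln ((sqrt (X + c) + sqrt X) * (sqrt X + 1) / (sqrt X * sqrt (1 + c) + sqrt (X + c))))) {1..}"
proof -
  define u where "u = sqrt (X + c)"
  define x where "x = sqrt X"
  define s where "s = sqrt (1 + c)"
  have u0: "u > 0" unfolding u_def using hc hX by simp
  have x0: "x > 0" unfolding x_def using hX by simp
  have s0: "s > 0" unfolding s_def using hc by simp
  have uu: "u^2 = x^2 + c" unfolding u_def x_def using hc hX by simp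
  define F where "F Z = 2/x * (ln (u * sqrt Z + x * sqrt (Z+c)) - ln (x + sqrt Z))" for Z
  have der: "(F has_real_derivative kf c u Z) (at Z)" if "Z > 1" for Z
  proof -
    have z0: "sqrt Z > 0" using that by simp
    have w0: "sqrt (Z + c) > 0" using that hc by simp
    have p1: "u * sqrt Z + x * sqrt (Z+c) > 0" using z0 w0 u0 x0 by (auto intro: add_pos_pos)
    have p2: "x + sqrt Z > 0" using z0 x0 by linarith
    have "(F has_real_derivative
       2/x*((u * (inverse (sqrt Z) / 2) + x * (inverse (sqrt (Z+c)) / 2))/(u * sqrt Z + x * sqrt (Z+c))
         - (inverse (sqrt Z) / 2)/(x + sqrt Z))) (at Z)"
      unfolding F_def using that hc p1 p2 x0
      by (auto intro!: derivative_eq_intros simp: ac_simps)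
    moreover have "2/x*((u * (inverse (sqrt Z) / 2) + x * (inverse (sqrt (Z+c)) / 2))/(u * sqrt Z + x * sqrt (Z+c))
         - (inverse (sqrt Z) / 2)/(x + sqrt Z)) = kf c u Z"
    proof -
      have "2/x*((u * (inverse (sqrt Z) / 2) + x * (inverse (sqrt (Z+c)) / 2))/(u * sqrt Z + x * sqrt (Z+c))
         - (inverse (sqrt Z) / 2)/(x + sqrt Z)) =
         2/x*((u/(2* sqrt Z) + x/(2* sqrt (Z+c)))/(u* sqrt Z + x* sqrt (Z+c)) - (1/(2* sqrt Z))/(x+sqrt Z))"
        by (simp add: field_simps)
      also have "\<dots> = 1/(sqrt Z* sqrt (Z+c)*(u+sqrt (Z+c)))"
        by (rule alg[OF z0 w0 u0 x0 uu]) (use that hc in simp)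
      finally show ?thesis unfolding kf_def by simp
    qed
    ultimately show ?thesis by simp
  qed
  have cont: "isCont (kf c u) Z" if "Z > 1" for Z
  proof -
    have "sqrt (Z+c) > 0" using that hc by simp
    then have "u + sqrt (Z+c) > 0" using u0 by linarith
    then show ?thesis unfolding kf_def using that hc u0
      by (intro continuous_intros) auto
  qed
  have nn: "0 \<le> kf c u Z" if "Z > 1" for Z
    unfolding kf_def using that hc u0 by (auto intro!: divide_nonneg_nonneg mult_nonneg_nonneg add_nonneg_nonneg)
  have Fc: "isCont F 1"
  proof -
    have "u + x * sqrt (1 + c) > 0" using u0 x0 s0 unfolding s_def by (simp add: add_pos_pos)
    then show ?thesis unfolding F_def using hc u0 x0 s0
      by (intro continuous_intros) (auto simp: add.commute)
  qed
  have A: "((F \<circ> real_of_ereal) \<longlongrightarrow> F 1) (at_right (ereal 1))"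
    unfolding ereal_tendsto_simps1 using Fc by (simp add: isCont_def filterlim_at_split)
  have B: "((F \<circ> real_of_ereal) \<longlongrightarrow> 2/x * ln (u+x)) (at_left \<infinity>)"
    unfolding ereal_tendsto_simps1 F_def by (rule lim1[OF u0 x0])
  have "ereal 1 < \<infinity>" by simp
  note ftc = interval_integral_FTC_nonneg[OF this der cont _ A B]
  have si: "set_integrable lborel {1<..} (kf c u)" and li: "(LBINT Z=ereal 1..\<infinity>. kf c u Z) = 2/x * ln (u+x) - F 1"
    using ftc nn by (auto simp: einterval_iff)
  have hI: "(kf c u has_integral (2/x * ln (u+x) - F 1)) {1<..}"
    using set_borel_integral_eq_integral[OF si] li
    by (simp add: interval_lebesgue_integral_def has_integral_integral)
  have "(kf c u has_integral (2/x * ln (u+x) - F 1)) {1..}"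
  proof -
    have n1: "negligible {Z \<in> {1..} - {1<..}. kf c u Z \<noteq> 0}"
      by (rule negligible_subset[of "{1}"]) auto
    have n2: "negligible {Z \<in> {1<..} - {1..}. kf c u Z \<noteq> (0::real)}"
      by (rule negligible_subset[of "{}"]) auto
    show ?thesis using has_integral_spike_set_eq[OF n1 n2] hI by simp
  qed
  moreover have "2/x * ln (u+x) - F 1 = 2 / x * ln ((u + x) * (x + 1) / (x * s + u))"
  proof -
    have e1: "F 1 = 2/x * (ln (u + x * s) - ln (x + 1))" unfolding F_def s_def by (simp add: add.commute)
    have e2: "ln ((u + x) * (x + 1) / (x * s + u)) = ln (u+x) + ln (x+1) - ln (u + x * s)"
    proof -
      have p: "x * s + u > 0" "(u + x) * (x + 1) > 0" using u0 x0 s0 by (simp_all add: add_pos_pos)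
      have "ln ((u + x) * (x + 1) / (x * s + u)) = ln ((u + x) * (x + 1)) - ln (x * s + u)"
        using p u0 x0 by (simp add: ln_div)
      also have "ln ((u + x) * (x + 1)) = ln (u+x) + ln (x+1)" using u0 x0 by (simp add: ln_mult)
      finally show ?thesis by (simp add: add.commute)
    qed
    show ?thesis apply (simp only: e1 e2) by (simp add: algebra_simps)
  qed
  ultimately show ?thesis unfolding u_def x_def s_def by simp
qed


definition kk :: "real \<Rightarrow> real \<Rightarrow> real \<Rightarrow> real \<Rightarrow> real" where
  "kk c p q Z = 1 / (sqrt Z * sqrt (Z + c) * (p + sqrt (Z + c)) * (q + sqrt (Z + c)))"

lemma kf_int: assumes "c > -1" "P \<ge> 1" shows "kf c (sqrt (P+c)) integrable_on {1..}"
  using L1[OF assms] by blast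

lemma kf_nonneg: assumes "c > -1" "p > 0" "Z \<ge> 1" shows "0 \<le> kf c p Z"
  unfolding kf_def using assms by (auto intro!: divide_nonneg_nonneg mult_nonneg_nonneg add_nonneg_nonneg)

lemma kk_nonneg: assumes "c > -1" "p > 0" "q > 0" "Z \<ge> 1" shows "0 \<le> kk c p q Z"
  unfolding kk_def using assms by (auto intro!: divide_nonneg_nonneg mult_nonneg_nonneg add_nonneg_nonneg)

lemma kk_int: assumes hc: "c > -1" and hP: "P \<ge> 1" and q: "q > 0"
  shows "kk c (sqrt (P+c)) q integrable_on {1..}"
proof -
  define p where "p = sqrt (P+c)"
  have p0: "p > 0" unfolding p_def using hc hP by simp
  have S0: "{1::real..} \<in> sets lborel" by simp
  have S: "{1::real..} \<in> sets lebesgue" using S0 by (rule sets_completionI_sets)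
  have cont: "continuous_on {1..} (kk c p q)"
  proof -
    have "\<forall>Z\<in>{1..}. isCont (kk c p q) Z"
    proof
      fix Z :: real assume "Z \<in> {1..}"
      then have "sqrt (Z+c) > 0" "sqrt Z > 0" using hc by auto
      then have "p + sqrt (Z+c) > 0" "q + sqrt (Z+c) > 0" using p0 q by linarith+
      then show "isCont (kk c p q) Z" unfolding kk_def using \<open>sqrt (Z+c) > 0\<close> \<open>sqrt Z > 0\<close>
        by (intro continuous_intros) auto
    qed
    then show ?thesis by (simp add: continuous_at_imp_continuous_on)
  qed
  have "kk c p q absolutely_integrable_on {1..}"
  proof (rule measurable_bounded_by_integrable_imp_absolutely_integrable)
    show "kk c p q \<in> borel_measurable (lebesgue_on {1..})"
      by (rule continuous_imp_measurable_on_sets_lebesgue[OF cont S])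
    show "{1::real..} \<in> sets lebesgue" by (rule S)
    show "(\<lambda>Z. kf c p Z / q) integrable_on {1..}"
      using kf_int[OF hc hP] unfolding p_def by (rule integrable_on_divide)
    fix Z :: real assume Z: "Z \<in> {1..}"
    then have w: "sqrt (Z+c) > 0" "sqrt Z > 0" using hc by auto
    have "kk c p q Z = kf c p Z / (q + sqrt (Z+c))" unfolding kk_def kf_def by simp
    also have "\<dots> \<le> kf c p Z / q"
      using kf_nonneg[OF hc p0, of Z] Z w q by (intro divide_left_mono) (auto intro!: mult_pos_pos add_pos_pos)
    finally show "norm (kk c p q Z) \<le> kf c p Z / q"
      using kk_nonneg[OF hc p0 q, of Z] Z by simp
  qed
  then show ?thesis unfolding p_def using set_lebesgue_integral_eq_integral(1) by blast
qed

lemma alg2: fixes z w p q :: real assumes "z > 0" "w > 0" "p + w > 0" "q + w > 0" "p \<noteq> q"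
  shows "1 / (z * w * (p + w) * (q + w)) = (1 / (z * w * (p + w)) - 1 / (z * w * (q + w))) / (q - p)"
  using assms by (simp add: divide_simps)

lemma kk_diff: assumes hc: "c > -1" "p > 0" "q > 0" "p \<noteq> q" "Z \<ge> 1"
  shows "kk c p q Z = (kf c p Z - kf c q Z) / (q - p)"
proof -
  have "sqrt (Z+c) > 0" "sqrt Z > 0" using assms by auto
  moreover then have "p + sqrt (Z+c) > 0" "q + sqrt (Z+c) > 0" using assms by linarith+
  ultimately show ?thesis unfolding kk_def kf_def using alg2 assms(4) by blast
qed



lemma alg3: fixes y v z w p :: real assumes "y>0" "v>0" "z>0" "w>0" "p>0"
  shows "1 / (y * (p + v)) * (1 / (z * w * (p + w) * (v + w))) + 1 / (z * (p + w)) * (1 / (y * v * (p + v) * (w + v)))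
    = 1 / (y * v * (p + v)) * (1 / (z * w * (p + w)))"
  using assms by (simp add: divide_simps) (simp add: algebra_simps)

lemma D:
  fixes c P :: real
  assumes hc: "c > -1" and hP: "P \<ge> 1"
  defines "p \<equiv> sqrt (P + c)"
  shows "((\<lambda>Y. 1 / (sqrt Y * (p + sqrt (Y + c))) * integral {1..} (kk c p (sqrt (Y + c))))
          has_integral (integral {1..} (kf c p))^2 / 2) {1..}"
proof -
  have p0: "p > 0" unfolding p_def using hc hP by simp
  define G where "G = integral {1..} (kf c p)"
  define a where "a Y = 1 / (sqrt Y * (p + sqrt (Y + c)))" for Y :: real
  define Kv where "Kv Y = integral {1..} (kk c p (sqrt (Y + c)))" for Y :: real
  define f2 where "f2 Y Z = indicator {1::real..} Y * indicator {1::real..} Z * (a Y * kk c p (sqrt (Y+c)) Z)" for Y Z :: real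
  have kfI: "(kf c p has_integral G) {1..}"
    unfolding G_def p_def using kf_int[OF hc hP] by (simp add: has_integral_integral)
  have a_nn: "a Y \<ge> 0" if "Y \<ge> 1" for Y
    unfolding a_def using that hc p0 by (auto intro!: divide_nonneg_nonneg mult_nonneg_nonneg add_nonneg_nonneg)
  have kkI: "(kk c p (sqrt (Y+c)) has_integral Kv Y) {1..}" if "Y \<ge> 1" for Y
    unfolding Kv_def using kk_int[OF hc hP, of "sqrt (Y+c)"] that hc p_def by (simp add: has_integral_integral)
  have Kv_nn: "Kv Y \<ge> 0" if "Y \<ge> 1" for Y
    using kkI[OF that] by (rule has_integral_nonneg) (use kk_nonneg[OF hc p0] that hc in auto)
  have f2_nn: "f2 Y Z \<ge> 0" for Y Z
    unfolding f2_def using a_nn kk_nonneg[OF hc p0] hc by (auto simp: indicator_def)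
  have meas[measurable]: "(\<lambda>(Y,Z). ennreal (f2 Y Z)) \<in> borel_measurable (lborel \<Otimes>\<^sub>M lborel)"
    unfolding f2_def a_def kk_def by measurable
  have meas2[measurable]: "(\<lambda>(Z,Y). ennreal (f2 Y Z)) \<in> borel_measurable (lborel \<Otimes>\<^sub>M lborel)"
    unfolding f2_def a_def kk_def by measurable
  have inner: "(\<integral>\<^sup>+Z. ennreal (f2 Y Z) \<partial>lborel) = ennreal (indicator {1..} Y * (a Y * Kv Y))" for Y
  proof (cases "Y \<ge> 1")
    case True
    have "(\<integral>\<^sup>+Z. ennreal (f2 Y Z) \<partial>lborel) = (\<integral>\<^sup>+Z. ennreal (a Y * kk c p (sqrt (Y+c)) Z) * indicator {1..} Z \<partial>lborel)"
      using True by (intro nn_integral_cong) (auto simp: f2_def indicator_def)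
    also have "\<dots> = ennreal (a Y * Kv Y)"
      using True kk_nonneg[OF hc p0] a_nn[OF True] hc
      by (intro nn_integral_has_integral_lebesgue' has_integral_mult_right kkI) auto
    finally show ?thesis using True by simp
  next
    case False
    then show ?thesis by (simp add: f2_def)
  qed
  have Gn: "(\<integral>\<^sup>+Z. ennreal (indicator {1..} Z * kf c p Z) \<partial>lborel) = ennreal G"
  proof -
    have "(\<integral>\<^sup>+Z. ennreal (indicator {1..} Z * kf c p Z) \<partial>lborel) = (\<integral>\<^sup>+Z. ennreal (kf c p Z) * indicator {1..} Z \<partial>lborel)"
      by (intro nn_integral_cong) (auto simp: indicator_def)
    also have "\<dots> = ennreal G"
      using kf_nonneg[OF hc p0] by (intro nn_integral_has_integral_lebesgue' kfI) auto
    finally show ?thesis .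
  qed
  have G_nn: "G \<ge> 0" using kfI by (rule has_integral_nonneg) (use kf_nonneg[OF hc p0] in auto)
  have sym: "ennreal (f2 Y Z) + ennreal (f2 Z Y) = ennreal (indicator {1..} Y * kf c p Y) * ennreal (indicator {1..} Z * kf c p Z)" for Y Z
  proof (cases "Y \<ge> 1 \<and> Z \<ge> 1")
    case True
    have pos: "sqrt Y > 0" "sqrt (Y+c) > 0" "sqrt Z > 0" "sqrt (Z+c) > 0" using True hc by auto
    have "f2 Y Z + f2 Z Y = kf c p Y * kf c p Z"
      using True alg3[OF pos p0] unfolding f2_def a_def kk_def kf_def by (simp add: mult.assoc)
    then show ?thesis using True f2_nn kf_nonneg[OF hc p0]
      by (simp add: ennreal_plus[symmetric] ennreal_mult[symmetric] del: ennreal_plus)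
  next
    case False
    then show ?thesis by (auto simp: f2_def)
  qed
  have mk[measurable]: "(\<lambda>Y. ennreal (indicator {1::real..} Y * kf c p Y)) \<in> borel_measurable lborel"
    unfolding kf_def by measurable
  define S where "S = (\<integral>\<^sup>+Y. (\<integral>\<^sup>+Z. ennreal (f2 Y Z) \<partial>lborel) \<partial>lborel)"
  have fub: "(\<integral>\<^sup>+Y. (\<integral>\<^sup>+Z. ennreal (f2 Z Y) \<partial>lborel) \<partial>lborel) = S"
    unfolding S_def by (rule lborel_pair.Fubini'[OF meas])
  have "S + S = (\<integral>\<^sup>+Y. (\<integral>\<^sup>+Z. ennreal (f2 Y Z) \<partial>lborel) + (\<integral>\<^sup>+Z. ennreal (f2 Z Y) \<partial>lborel) \<partial>lborel)"
  proof -
    have "S + S = (\<integral>\<^sup>+Y. (\<integral>\<^sup>+Z. ennreal (f2 Y Z) \<partial>lborel) \<partial>lborel) + (\<integral>\<^sup>+Y. (\<integral>\<^sup>+Z. ennreal (f2 Z Y) \<partial>lborel) \<partial>lborel)"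
      unfolding fub unfolding S_def ..
    also have "\<dots> = (\<integral>\<^sup>+Y. (\<integral>\<^sup>+Z. ennreal (f2 Y Z) \<partial>lborel) + (\<integral>\<^sup>+Z. ennreal (f2 Z Y) \<partial>lborel) \<partial>lborel)"
      by (rule nn_integral_add[symmetric]) measurable
    finally show ?thesis .
  qed
  also have "\<dots> = (\<integral>\<^sup>+Y. (\<integral>\<^sup>+Z. ennreal (f2 Y Z) + ennreal (f2 Z Y) \<partial>lborel) \<partial>lborel)"
    by (intro nn_integral_cong, subst nn_integral_add) auto
  also have "\<dots> = (\<integral>\<^sup>+Y. ennreal (indicator {1..} Y * kf c p Y) * (\<integral>\<^sup>+Z. ennreal (indicator {1..} Z * kf c p Z) \<partial>lborel) \<partial>lborel)"
    unfolding sym by (intro nn_integral_cong, subst nn_integral_cmult) (auto simp: kf_def)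
  also have "\<dots> = ennreal G * ennreal G"
    unfolding Gn by (subst nn_integral_multc) (use mk Gn in auto)
  finally have SS: "S + S = ennreal (G * G)" using G_nn by (simp add: ennreal_mult)
  have Sval: "S = ennreal (G^2 / 2)"
  proof (cases S rule: ennreal_cases)
    case (real t)
    then have "ennreal (t + t) = ennreal (G*G)" using SS by (simp add: ennreal_plus[symmetric] del: ennreal_plus)
    then have "t + t = G * G" using real(1) G_nn by (subst (asm) ennreal_inj) auto
    then show ?thesis using real by (simp add: power2_eq_square)
  next
    case top
    then show ?thesis using SS by simp
  qed
  define h where "h Y = indicator {1::real..} Y * (a Y * Kv Y)" for Y
  have h_nn: "h Y \<ge> 0" for Y unfolding h_def using a_nn Kv_nn by (auto simp: indicator_def)
  have h_eq: "h Y = enn2real (\<integral>\<^sup>+Z. ennreal (f2 Y Z) \<partial>lborel)" for Y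
    unfolding inner h_def[symmetric] using h_nn by simp
  have hmeas: "h \<in> borel_measurable borel"
  proof -
    have "(\<lambda>Y. enn2real (\<integral>\<^sup>+Z. ennreal (f2 Y Z) \<partial>lborel)) \<in> borel_measurable lborel"
      by measurable
    then show ?thesis unfolding h_eq[abs_def] by simp
  qed
  have "(\<integral>\<^sup>+Y. ennreal (h Y) \<partial>lborel) = ennreal (G^2/2)"
    unfolding h_def inner[symmetric] S_def[symmetric] by (rule Sval)
  then have "(h has_integral G^2/2) UNIV"
    by (intro nn_integral_has_integral hmeas h_nn) auto
  then have "((\<lambda>Y. if Y \<in> {1..} then a Y * Kv Y else 0) has_integral G^2/2) UNIV"
    by (rule has_integral_cong[THEN iffD1, rotated]) (simp add: h_def indicator_def)
  then show ?thesis unfolding has_integral_restrict_UNIV a_def Kv_def G_def .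
qed



lemma alg4:
  fixes y u v s l X Y Gu Gv Gs :: real
  assumes "y>0" "u>0" "v>0" "s>0" "u\<noteq>v" "s\<noteq>v"
    and "X - Y = u^2 - v^2" "1 - Y = s^2 - v^2"
  shows "2 * l/y * ((u + l * Gu - (v + l * Gv))/(X-Y) - (s + l * Gs - (v + l * Gv))/(1-Y))
     = 2 * l * (s * (1/(y * v * (s+v))) - u * (1/(y * v * (u+v))))
       - 2 * l * l * (1/(y * (u+v)) * ((Gu-Gv)/(v-u)) - 1/(y * (s+v)) * ((Gs-Gv)/(v-s)))"
proof -
  have a: "X - Y = (u-v) * (u+v)" using assms(7) by (simp add: power2_eq_square algebra_simps)
  have b: "1 - Y = (s-v) * (s+v)" using assms(8) by (simp add: power2_eq_square algebra_simps)
  have n: "u - v \<noteq> 0" "s - v \<noteq> 0" "v - u \<noteq> 0" "v - s \<noteq> 0" "u+v \<noteq> 0" "s+v\<noteq>0" using assms by auto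
  show ?thesis unfolding a b using n assms(1-4)
    by (simp add: divide_simps) (simp add: algebra_simps)
qed


lemma W_repr: assumes hc: "c > -1" and hY: "Y \<ge> 1"
  shows "Wfun lam c Y = sqrt (Y + c) + lam^2 * integral {1..} (kf c (sqrt (Y + c)))"
  unfolding Wfun_def integral_unique[OF L1[OF hc hY]] by simp

lemma K_repr: assumes hc: "c > -1" and hP: "P \<ge> 1" and hQ: "Q \<ge> 1" and ne: "sqrt (P+c) \<noteq> sqrt (Q+c)"
  shows "integral {1..} (kk c (sqrt (P+c)) (sqrt (Q+c))) =
    (integral {1..} (kf c (sqrt (P+c))) - integral {1..} (kf c (sqrt (Q+c)))) / (sqrt (Q+c) - sqrt (P+c))"
proof -
  have p0: "sqrt (P+c) > 0" "sqrt (Q+c) > 0" using hc hP hQ by auto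
  have "((\<lambda>Z. (kf c (sqrt (P+c)) Z - kf c (sqrt (Q+c)) Z) / (sqrt (Q+c) - sqrt (P+c))) has_integral
    (integral {1..} (kf c (sqrt (P+c))) - integral {1..} (kf c (sqrt (Q+c)))) / (sqrt (Q+c) - sqrt (P+c))) {1..}"
    using kf_int[OF hc hP] kf_int[OF hc hQ]
    by (intro has_integral_divide has_integral_diff) (auto simp: has_integral_integral)
  then have "(kk c (sqrt (P+c)) (sqrt (Q+c)) has_integral
    (integral {1..} (kf c (sqrt (P+c))) - integral {1..} (kf c (sqrt (Q+c)))) / (sqrt (Q+c) - sqrt (P+c))) {1..}"
    by (rule has_integral_cong[THEN iffD1, rotated]) (use kk_diff[OF hc p0 ne] in auto)
  then show ?thesis by (rule integral_unique)
qed

theorem proposition1: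
  fixes lam c :: real
  assumes hc: "c > -1"
    and heq: "1 = sqrt (c + 1) + 2 * lam^2 * ln (1 + 1 / sqrt (c + 1))"
  shows "\<forall>X\<ge>1.
     (\<lambda>Y. rho lam Y * (dq (Wfun lam c) X Y - dq (Wfun lam c) 1 Y)) integrable_on {1..} \<and>
     (Wfun lam c X)^2
       + integral {1..} (\<lambda>Y. rho lam Y * (dq (Wfun lam c) X Y - dq (Wfun lam c) 1 Y)) = X"
proof (intro allI impI)
  fix X :: real assume hX: "X \<ge> 1"
  define l where "l = lam^2"
  define u where "u = sqrt (X + c)"
  define s where "s = sqrt (1 + c)"
  define G where "G p = integral {1..} (kf c p)" for p
  define hh where "hh p Y = 1 / (sqrt Y * (p + sqrt (Y + c))) * integral {1..} (kk c p (sqrt (Y + c)))" for p Y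
  have u0: "u > 0" unfolding u_def using hc hX by simp
  have s0: "s > 0" unfolding s_def using hc by simp
  have W1: "Wfun lam c 1 = 1"
  proof -
    have e: "(s + 1) * (1 + 1) / (s + s) = 1 + 1 / s" using s0 by (simp add: field_simps)
    have "Wfun lam c 1 = s + 2 * lam^2 * ln ((s + 1) * (1 + 1) / (s + s))"
      unfolding Wfun_def s_def by simp
    also have "\<dots> = 1" unfolding e using heq unfolding s_def by (simp add: add.commute)
    finally show ?thesis .
  qed
  have WX: "Wfun lam c X = u + l * G u" unfolding u_def l_def G_def using W_repr[OF hc hX] .
  have Ws: "Wfun lam c 1 = s + l * G s" unfolding s_def l_def G_def using W_repr[OF hc, of 1] by simp
  have ws1: "s + l * G s = 1" using W1 Ws by simp
  define F where "F Y = 2 * l * (s * kf c s Y - u * kf c u Y) - 2 * l * l * (hh u Y - hh s Y)" for Y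
  have FI: "(F has_integral (2 * l * (s * G s - u * G u) - 2 * l * l * ((G u)^2/2 - (G s)^2/2))) {1..}"
  proof -
    have i1: "(kf c u has_integral G u) {1..}" "(kf c s has_integral G s) {1..}"
      unfolding u_def s_def G_def using kf_int[OF hc hX] kf_int[OF hc, of 1] by (auto simp: has_integral_integral)
    have i2: "(hh u has_integral (G u)^2/2) {1..}" "(hh s has_integral (G s)^2/2) {1..}"
      unfolding u_def s_def G_def hh_def using D[OF hc hX] D[OF hc, of 1] by auto
    show ?thesis unfolding F_def
      by (intro has_integral_diff has_integral_mult_right i1 i2)
  qed
  have eq: "rho lam Y * (dq (Wfun lam c) X Y - dq (Wfun lam c) 1 Y) = F Y" if Y: "Y \<in> {1..} - {1, X}" for Y
  proof -
    define v where "v = sqrt (Y + c)"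
    define y where "y = sqrt Y"
    have Y1: "Y \<ge> 1" "Y \<noteq> 1" "Y \<noteq> X" using Y by auto
    have v0: "v > 0" unfolding v_def using hc Y1 by simp
    have y0: "y > 0" unfolding y_def using Y1 by simp
    have uv: "u \<noteq> v" unfolding u_def v_def using Y1 hc hX by simp
    have sv: "s \<noteq> v" unfolding s_def v_def using Y1 hc by (simp add: add.commute)
    have WY: "Wfun lam c Y = v + l * G v" unfolding v_def l_def G_def using W_repr[OF hc Y1(1)] .
    have Kuv: "integral {1..} (kk c u v) = (G u - G v) / (v - u)"
      unfolding u_def v_def G_def using K_repr[OF hc hX Y1(1)] uv unfolding u_def v_def by simp
    have Ksv: "integral {1..} (kk c s v) = (G s - G v) / (v - s)"
      unfolding s_def v_def G_def using K_repr[OF hc _ Y1(1), of 1] sv unfolding s_def v_def by simp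
    have xy: "X - Y = u^2 - v^2" unfolding u_def v_def using hc hX Y1 by simp
    have oy: "1 - Y = s^2 - v^2" unfolding s_def v_def using hc Y1 by simp
    have "rho lam Y * (dq (Wfun lam c) X Y - dq (Wfun lam c) 1 Y)
        = 2 * l / y * ((u + l * G u - (v + l * G v)) / (X - Y) - (s + l * G s - (v + l * G v)) / (1 - Y))"
      unfolding rho_def dq_def WX WY Ws l_def y_def using Y1 by simp
    also have "\<dots> = 2 * l * (s * (1/(y * v * (s+v))) - u * (1/(y * v * (u+v))))
       - 2 * l * l * (1/(y * (u+v)) * ((G u - G v)/(v-u)) - 1/(y * (s+v)) * ((G s - G v)/(v-s)))"
      by (rule alg4[OF y0 u0 v0 s0 uv sv xy oy])
    also have "\<dots> = F Y"
      unfolding Kuv[symmetric] Ksv[symmetric] unfolding F_def hh_def kf_def y_def v_def by (simp add: mult.assoc)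
    finally show ?thesis .
  qed
  have main: "((\<lambda>Y. rho lam Y * (dq (Wfun lam c) X Y - dq (Wfun lam c) 1 Y)) has_integral
      (2 * l * (s * G s - u * G u) - 2 * l * l * ((G u)^2/2 - (G s)^2/2))) {1..}"
    by (rule has_integral_spike_finite[where S="{1, X}", OF _ eq FI]) auto
  have uu: "u^2 = X + c" unfolding u_def using hc hX by simp
  have ss: "s^2 = 1 + c" unfolding s_def using hc by simp
  have "(Wfun lam c X)^2 + (2 * l * (s * G s - u * G u) - 2 * l * l * ((G u)^2/2 - (G s)^2/2))
      = u^2 + (s + l * G s)^2 - s^2"
    unfolding WX by (simp add: power2_eq_square algebra_simps)
  also have "\<dots> = X" unfolding ws1 uu ss by simp
  finally have fin: "(Wfun lam c X)^2 + (2 * l * (s * G s - u * G u) - 2 * l * l * ((G u)^2/2 - (G s)^2/2)) = X" .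
  show "(\<lambda>Y. rho lam Y * (dq (Wfun lam c) X Y - dq (Wfun lam c) 1 Y)) integrable_on {1..} \<and>
     (Wfun lam c X)^2
       + integral {1..} (\<lambda>Y. rho lam Y * (dq (Wfun lam c) X Y - dq (Wfun lam c) 1 Y)) = X"
    using main fin integral_unique[OF main] unfolding integrable_on_def by auto
qed


end
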